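(* Let $q\ge5$ be a prime power and let $\mathcal{C}_\mathscr{C}$ be the $[q+1,q-3,5]_q$ code with parity check matrix whose columns are the vectors $(1,t,t^2,t^3)$, $t\in\mathbb{F}_q$, and $(0,0,0,1)$. All weight-$1$ cosets $\mathcal{V}^{(1)}$ of $\mathcal{C}_\mathscr{C}$ have the same weight distribution, namely $B_0(\mathcal{V}^{(1)})=B_2(\mathcal{V}^{(1)})=B_3(\mathcal{V}^{(1)})=0$, $B_1(\mathcal{V}^{(1)})=1$, $B_4(\mathcal{V}^{(1)})=\binom{q}{4}$, and for $w\ge5$ $$B_w(\mathcal{V}^{(1)})=A_w(\mathcal{C}_\mathscr{C})+(-1)^{w}\left(\binom{q+1}{w}\binom{w-1}{3}-\binom{q}{w-1}\binom{w-2}{2}\right).$$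
   Context: A coset of a linear code $\mathcal{C}\subseteq\mathbb{F}_q^n$ is a set $\mathbf{v}+\mathcal{C}$; its weight is the minimum Hamming weight of its vectors. $B_w(\mathcal{V})$ is the number of vectors of Hamming weight $w$ in the coset $\mathcal{V}$, and $A_w(\mathcal{C}_\mathscr{C})$ is the number of codewords of Hamming weight $w$ in $\mathcal{C}_\mathscr{C}$. *)

theory Defs
  imports Main
begin

text \<open>Coordinates of the code are indexed by 'a option: Some t corresponds to the
column (1,t,t^2,t^3), t in F_q, and None to the column (0,0,0,1).
Vectors of F_q^(q+1) are functions 'a option => 'a.\<close>

definition pcm_col :: "'a::{field,finite} option \<Rightarrow> nat \<Rightarrow> 'a" where
  "pcm_col j i = (case j of Some t \<Rightarrow> t ^ i | None \<Rightarrow> (if i = 3 then 1 else 0))"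

definition code_C :: "('a::{field,finite} option \<Rightarrow> 'a) set" where
  "code_C = {c. \<forall>i<4. (\<Sum>j\<in>UNIV. c j * pcm_col j i) = 0}"

definition hweight :: "('b \<Rightarrow> 'a::zero) \<Rightarrow> nat" where
  "hweight v = card {j. v j \<noteq> 0}"

definition coset :: "('b \<Rightarrow> 'a::plus) \<Rightarrow> ('b \<Rightarrow> 'a) set \<Rightarrow> ('b \<Rightarrow> 'a) set" where
  "coset v C = (\<lambda>c. (\<lambda>j. v j + c j)) ` C"

definition coset_weight :: "('b \<Rightarrow> 'a::zero) set \<Rightarrow> nat" where
  "coset_weight V = Min (hweight ` V)"

definition Bw :: "nat \<Rightarrow> ('b \<Rightarrow> 'a::zero) set \<Rightarrow> nat" where
  "Bw w V = card {u\<in>V. hweight u = w}"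

definition Aw :: "nat \<Rightarrow> ('b \<Rightarrow> 'a::zero) set \<Rightarrow> nat" where
  "Aw w C = card {c\<in>C. hweight c = w}"

end

theory Submission
  imports Defs "HOL-Computational_Algebra.Polynomial" "HOL-Library.FuncSet" "HOL-Library.Cardinality"
begin

definition syn :: "('a::{field,finite} option \<Rightarrow> 'a) \<Rightarrow> nat \<Rightarrow> 'a" where
  "syn u i = (\<Sum>j\<in>UNIV. u j * pcm_col j i)"

definition supp :: "('b \<Rightarrow> 'a::zero) \<Rightarrow> 'b set" where
  "supp u = {j. u j \<noteq> 0}"

lemma syn_diff: "syn (\<lambda>j. u j - u' j) i = syn u i - syn u' i"
  unfolding syn_def by (simp add: sum_subtractf left_diff_distrib)

lemma syn_add: "syn (\<lambda>j. u j + u' j) i = syn u i + syn u' i"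
  unfolding syn_def by (simp add: sum.distrib distrib_right)

lemma syn_expand: "syn u i = (\<Sum>t\<in>UNIV. u (Some t) * t ^ i) + (if i = 3 then u None else 0)"
proof -
  have "syn u i = u None * pcm_col None i + (\<Sum>j\<in>range Some. u j * pcm_col j i)"
    unfolding syn_def UNIV_option_conv by (subst sum.insert) auto
  also have "(\<Sum>j\<in>range Some. u j * pcm_col j i) = (\<Sum>t\<in>UNIV. u (Some t) * t ^ i)"
    by (subst sum.reindex) (auto simp: pcm_col_def)
  finally show ?thesis by (simp add: pcm_col_def add.commute)
qed

lemma poly_sum4:
  fixes p :: "'a::comm_ring_1 poly"
  assumes "degree p \<le> 3"
  shows "poly p x = (\<Sum>i<4. coeff p i * x ^ i)"
proof -
  have "poly p x = (\<Sum>i\<le>degree p. coeff p i * x ^ i)" by (rule poly_altdef)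
  also have "\<dots> = (\<Sum>i<4. coeff p i * x ^ i)"
    by (rule sum.mono_neutral_left) (use assms in \<open>auto simp: coeff_eq_0\<close>)
  finally show ?thesis .
qed

lemma indep_some:
  fixes u :: "'a::{field,finite} option \<Rightarrow> 'a"
  assumes c: "card (supp u) \<le> 4" and s: "\<forall>i<4. syn u i = 0"
  shows "u (Some t0) = 0"
proof (rule ccontr)
  assume nz: "u (Some t0) \<noteq> 0"
  define P where "P = {t. u (Some t) \<noteq> 0}"
  define Q where "Q = P - {t0}"
  have suppeq: "supp u = Some ` P \<union> (if u None \<noteq> 0 then {None} else {})"
  proof (rule set_eqI)
    fix j show "j \<in> supp u \<longleftrightarrow> j \<in> Some ` P \<union> (if u None \<noteq> 0 then {None} else {})"
      by (cases j) (auto simp: supp_def P_def)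
  qed
  have cardsupp: "card (supp u) = card P + (if u None \<noteq> 0 then 1 else 0)"
    unfolding suppeq by (subst card_Un_disjoint) (auto simp: card_image)
  have t0P: "t0 \<in> P" using nz by (simp add: P_def)
  have cQ: "card Q = card P - 1" unfolding Q_def using t0P by simp
  have cP: "card P \<ge> 1" using t0P by (metis One_nat_def Suc_leI card_gt_0_iff empty_iff finite)
  define p where "p = (\<Prod>t\<in>Q. [:-t, 1:])"
  have degp: "degree p = card Q"
    unfolding p_def by (subst degree_prod_eq_sum_degree) auto
  have polyp: "poly p x = (\<Prod>t\<in>Q. x - t)" for x
    unfolding p_def poly_prod by simp
  have deg3: "degree p \<le> 3" using degp cQ c cardsupp by simp
  have "0 = (\<Sum>i<4. coeff p i * syn u i)" using s by simp
  also have "\<dots> = (\<Sum>i<4. coeff p i * (\<Sum>t\<in>UNIV. u (Some t) * t ^ i)) + coeff p 3 * u None"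
    by (simp add: syn_expand distrib_left sum.distrib eval_nat_numeral)
  also have "(\<Sum>i<4. coeff p i * (\<Sum>t\<in>UNIV. u (Some t) * t ^ i)) = (\<Sum>t\<in>UNIV. u (Some t) * poly p t)"
  proof -
    have "(\<Sum>i<4. coeff p i * (\<Sum>t\<in>UNIV. u (Some t) * t ^ i))
        = (\<Sum>i<4. \<Sum>t\<in>UNIV. u (Some t) * (coeff p i * t ^ i))"
      by (simp add: sum_distrib_left mult_ac)
    also have "\<dots> = (\<Sum>t\<in>UNIV. \<Sum>i<4. u (Some t) * (coeff p i * t ^ i))"
      by (rule sum.swap)
    also have "\<dots> = (\<Sum>t\<in>UNIV. u (Some t) * poly p t)"
      by (simp add: poly_sum4[OF deg3] sum_distrib_left)
    finally show ?thesis .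
  qed
  also have "\<dots> = u (Some t0) * poly p t0"
  proof -
    have "(\<Sum>t\<in>UNIV. u (Some t) * poly p t) = u (Some t0) * poly p t0 + (\<Sum>t\<in>UNIV - {t0}. u (Some t) * poly p t)"
      by (rule sum.remove) auto
    also have "(\<Sum>t\<in>UNIV - {t0}. u (Some t) * poly p t) = 0"
    proof (rule sum.neutral, rule ballI)
      fix t assume "t \<in> UNIV - {t0}"
      then show "u (Some t) * poly p t = 0"
        by (cases "t \<in> P") (auto simp: polyp Q_def P_def intro!: prod_zero)
    qed
    finally show ?thesis by simp
  qed
  also have "coeff p 3 * u None = 0"
  proof (cases "u None = 0")
    case False
    then have "degree p < 3" using degp cQ c cardsupp cP by simp
    then show ?thesis by (simp add: coeff_eq_0)
  qed simp
  finally have "u (Some t0) * poly p t0 = 0" by simp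
  moreover have "poly p t0 \<noteq> 0" unfolding polyp Q_def by simp
  ultimately show False using nz by simp
qed

lemma indep:
  fixes u :: "'a::{field,finite} option \<Rightarrow> 'a"
  assumes c: "card (supp u) \<le> 4" and s: "\<forall>i<4. syn u i = 0"
  shows "u = (\<lambda>_. 0)"
proof -
  have S: "u (Some t) = 0" for t using indep_some[OF assms] .
  have "syn u 3 = u None" by (simp add: syn_expand S)
  then have "u None = 0" using s by simp
  then show ?thesis using S by (metis option.exhaust ext)
qed

lemma card_supported:
  assumes "finite B"
  shows "card {u :: 'b \<Rightarrow> 'c::zero. \<forall>j. j \<notin> B \<longrightarrow> u j = 0} = card (UNIV::'c set) ^ card B"
proof -
  have "bij_betw (\<lambda>u. restrict u B) {u :: 'b \<Rightarrow> 'c. \<forall>j. j \<notin> B \<longrightarrow> u j = 0} (PiE B (\<lambda>_. UNIV))"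
  proof (rule bij_betwI[where g = "\<lambda>f j. if j \<in> B then f j else 0"])
    show "(\<lambda>u. restrict u B) \<in> {u. \<forall>j. j \<notin> B \<longrightarrow> u j = 0} \<rightarrow> (\<Pi>\<^sub>E i\<in>B. UNIV)" by auto
    show "(\<lambda>f j. if j \<in> B then f j else 0) \<in> (\<Pi>\<^sub>E i\<in>B. UNIV) \<rightarrow> {u :: 'b \<Rightarrow> 'c. \<forall>j. j \<notin> B \<longrightarrow> u j = 0}" by auto
    show "(\<lambda>j. if j \<in> B then restrict x B j else 0) = x" if "x \<in> {u :: 'b \<Rightarrow> 'c. \<forall>j. j \<notin> B \<longrightarrow> u j = 0}" for x
      using that by (auto simp: fun_eq_iff)
    show "restrict (\<lambda>j. if j \<in> B then y j else 0) B = y" if "y \<in> (\<Pi>\<^sub>E i\<in>B. (UNIV :: 'c set))" for y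
      using that by (auto simp: fun_eq_iff PiE_def extensional_def)
  qed
  then have "card {u :: 'b \<Rightarrow> 'c. \<forall>j. j \<notin> B \<longrightarrow> u j = 0} = card (PiE B (\<lambda>_. (UNIV :: 'c set)))"
    by (rule bij_betw_same_card)
  also have "\<dots> = card (UNIV::'c set) ^ card B"
    using assms by (simp add: card_PiE)
  finally show ?thesis .
qed

lemma surj4:
  fixes s :: "nat \<Rightarrow> 'a::{field,finite}" and B :: "'a option set"
  assumes B: "card B = 4"
  shows "\<exists>u. supp u \<subseteq> B \<and> (\<forall>i<4. syn u i = s i)"
proof -
  define FB where "FB = {u :: 'a option \<Rightarrow> 'a. \<forall>j. j \<notin> B \<longrightarrow> u j = 0}"
  define \<phi> where "\<phi> (u :: 'a option \<Rightarrow> 'a) = (syn u 0, syn u 1, syn u 2, syn u 3)" for u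
  have i4: "(\<forall>i<4. P i) \<longleftrightarrow> P 0 \<and> P 1 \<and> P 2 \<and> P 3" for P :: "nat \<Rightarrow> bool"
    by (auto simp: less_Suc_eq eval_nat_numeral)
  have inj: "inj_on \<phi> FB"
  proof (rule inj_onI)
    fix u u' assume u: "u \<in> FB" and u': "u' \<in> FB" and eq: "\<phi> u = \<phi> u'"
    have "\<forall>i<4. syn (\<lambda>j. u j - u' j) i = 0"
      using eq by (simp add: i4 syn_diff \<phi>_def)
    moreover have "card (supp (\<lambda>j. u j - u' j)) \<le> 4"
    proof -
      have "supp (\<lambda>j. u j - u' j) \<subseteq> B" using u u' by (auto simp: FB_def supp_def) (metis)
      then show ?thesis using B by (metis card_mono finite)
    qed
    ultimately have "(\<lambda>j. u j - u' j) = (\<lambda>_. 0)" using indep by blast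
    then show "u = u'" by (auto simp: fun_eq_iff dest: fun_cong)
  qed
  have "card (\<phi> ` FB) = card (UNIV :: ('a \<times> 'a \<times> 'a \<times> 'a) set)"
    using card_image[OF inj] card_supported[of B] B
    by (simp add: FB_def card_cartesian_product flip: UNIV_Times_UNIV) (simp add: eval_nat_numeral)
  then have "\<phi> ` FB = UNIV"
    by (intro card_subset_eq) auto
  then obtain u where "u \<in> FB" "\<phi> u = (s 0, s 1, s 2, s 3)"
    by (metis UNIV_I imageE)
  then show ?thesis
    by (intro exI[of _ u]) (auto simp: i4 \<phi>_def FB_def supp_def)
qed

definition sol :: "(nat \<Rightarrow> 'a::{field,finite}) \<Rightarrow> 'a option set \<Rightarrow> ('a option \<Rightarrow> 'a) set" where
  "sol s S = {u. supp u \<subseteq> S \<and> (\<forall>i<4. syn u i = s i)}"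

definition exs :: "(nat \<Rightarrow> 'a::{field,finite}) \<Rightarrow> 'a option set \<Rightarrow> ('a option \<Rightarrow> 'a) set" where
  "exs s S = {u. supp u = S \<and> (\<forall>i<4. syn u i = s i)}"

lemma supp_diff: "supp (\<lambda>j. x j - y j) \<subseteq> supp x \<union> supp (y :: 'b \<Rightarrow> 'c::ab_group_add)"
  by (auto simp: supp_def)

lemma supp_add: "supp (\<lambda>j. x j + y j) \<subseteq> supp x \<union> supp (y :: 'b \<Rightarrow> 'c::ab_group_add)"
  by (auto simp: supp_def)

lemma sol_sum: "card (sol s S) = (\<Sum>T\<in>Pow S. card (exs s T))"
proof -
  have "sol s S = (\<Union>T\<in>Pow S. exs s T)"
    by (auto simp: sol_def exs_def)
  then show ?thesis
    by (simp add: card_UN_disjoint) (subst card_UN_disjoint, auto simp: exs_def)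
qed

lemma count_supp:
  "card {u. (\<forall>i<4. syn u i = s i) \<and> card (supp u) = w} = (\<Sum>S\<in>{S. card S = w}. card (exs s S))"
proof -
  have "{u. (\<forall>i<4. syn u i = s i) \<and> card (supp u) = w} = (\<Union>S\<in>{S. card S = w}. exs s S)"
    by (auto simp: exs_def)
  then show ?thesis
    by simp (subst card_UN_disjoint, auto simp: exs_def)
qed

lemma sol_big:
  fixes s :: "nat \<Rightarrow> 'a::{field,finite}"
  assumes "card S \<ge> 4"
  shows "card (sol s S) = card (sol (\<lambda>_. 0) S)"
proof -
  obtain B where B: "B \<subseteq> S" "card B = 4"
    using obtain_subset_with_card_n[OF assms] by metis
  obtain u0 where u0: "supp u0 \<subseteq> B" "\<forall>i<4. syn u0 i = s i"
    using surj4[OF B(2)] by metis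
  have "sol s S = (\<lambda>u j. u j + u0 j) ` sol (\<lambda>_. 0) S"
  proof (rule set_eqI, rule iffI)
    fix x assume x: "x \<in> sol s S"
    have "(\<lambda>j. x j - u0 j) \<in> sol (\<lambda>_. 0) S"
      using x u0 B supp_diff[of x u0] by (auto simp: sol_def syn_diff) blast
    then show "x \<in> (\<lambda>u j. u j + u0 j) ` sol (\<lambda>_. 0) S"
      using image_eqI[of x "\<lambda>u j. u j + u0 j" "\<lambda>j. x j - u0 j"] by simp
  next
    fix x assume "x \<in> (\<lambda>u j. u j + u0 j) ` sol (\<lambda>_. 0) S"
    then obtain u where u: "u \<in> sol (\<lambda>_. 0) S" and x: "x = (\<lambda>j. u j + u0 j)" by blast
    show "x \<in> sol s S"
      using u u0 B supp_add[of u u0] unfolding x by (auto simp: sol_def syn_add) blast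
  qed
  moreover have "inj_on (\<lambda>u j. u j + u0 j) (sol (\<lambda>_. 0) S)"
    by (rule inj_onI) (auto simp: fun_eq_iff)
  ultimately show ?thesis by (simp add: card_image)
qed

lemma sol_small_z:
  assumes "card S \<le> 3"
  shows "sol (\<lambda>_. 0) S = {(\<lambda>_. 0 :: 'a::{field,finite})}"
proof
  show "sol (\<lambda>_. 0) S \<subseteq> {(\<lambda>_. 0 :: 'a)}"
  proof
    fix u :: "'a option \<Rightarrow> 'a" assume u: "u \<in> sol (\<lambda>_. 0) S"
    then have "card (supp u) \<le> 4" using assms card_mono[of S "supp u"]
      by (simp add: sol_def)
    then show "u \<in> {\<lambda>_. 0}" using indep u by (auto simp: sol_def)
  qed
  show "{(\<lambda>_. 0 :: 'a)} \<subseteq> sol (\<lambda>_. 0) S"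
    by (auto simp: sol_def supp_def syn_def)
qed

lemma sol_small_s:
  fixes a :: "'a::{field,finite}" and j0 :: "'a option"
  assumes "card S \<le> 3" and a: "a \<noteq> 0"
  defines "e \<equiv> (\<lambda>j. if j = j0 then a else 0)"
  shows "sol (syn e) S = (if j0 \<in> S then {e} else {})"
proof -
  have sub: "u = e" if u: "u \<in> sol (syn e) S" for u
  proof -
    have "supp (\<lambda>j. u j - e j) \<subseteq> insert j0 S"
      using u by (auto simp: sol_def supp_def e_def)
    then have "card (supp (\<lambda>j. u j - e j)) \<le> card (insert j0 S)"
      by (simp add: card_mono)
    also have "\<dots> \<le> 4" using assms(1) card_insert_le_m1[of 4 S j0] by (simp add: card_insert_if)
    finally have "(\<lambda>j. u j - e j) = (\<lambda>_. 0)"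
      using u by (intro indep) (auto simp: sol_def syn_diff)
    then show ?thesis by (auto simp: fun_eq_iff dest: fun_cong)
  qed
  have suppe: "supp e = {j0}" using a by (auto simp: supp_def e_def)
  show ?thesis
  proof (cases "j0 \<in> S")
    case True
    then have "e \<in> sol (syn e) S" using suppe by (auto simp: sol_def)
    then show ?thesis using sub True by auto
  next
    case False
    then have "e \<notin> sol (syn e) S" using suppe by (auto simp: sol_def)
    then show ?thesis using sub False by auto
  qed
qed

lemma sum_pow_card:
  assumes "finite S"
  shows "(\<Sum>T\<in>Pow S. h (card T)) = (\<Sum>i\<le>card S. int (card S choose i) * (h i :: int))"
proof -
  have "(\<Sum>T\<in>Pow S. h (card T)) = (\<Sum>i\<le>card S. \<Sum>T\<in>{T\<in>Pow S. card T = i}. h (card T))"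
    by (rule sum.group[symmetric]) (use assms in \<open>auto intro: card_mono\<close>)
  also have "\<dots> = (\<Sum>i\<le>card S. int (card S choose i) * h i)"
  proof (rule sum.cong[OF refl])
    fix i
    have "(\<Sum>T\<in>{T\<in>Pow S. card T = i}. h (card T)) = (\<Sum>T\<in>{T\<in>Pow S. card T = i}. h i)"
      by (rule sum.cong) auto
    also have "\<dots> = int (card {T. T \<subseteq> S \<and> card T = i}) * h i" by simp
    also have "\<dots> = int (card S choose i) * h i" using n_subsets[OF assms] by simp
    finally show "(\<Sum>T\<in>{T\<in>Pow S. card T = i}. h (card T)) = int (card S choose i) * h i" .
  qed
  finally show ?thesis .
qed

lemma alt3:
  assumes "finite A" "card A \<ge> 3"
  shows "(\<Sum>T\<in>Pow A. if card T \<le> 3 then (-1::int) ^ card T else 0) = - int (card A - 1 choose 3)"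
proof -
  define m where "m = card A"
  have "(\<Sum>T\<in>Pow A. if card T \<le> 3 then (-1::int) ^ card T else 0)
      = (\<Sum>i\<le>m. int (m choose i) * (if i \<le> 3 then (-1) ^ i else 0))"
    unfolding m_def by (rule sum_pow_card[OF assms(1)])
  also have "\<dots> = (\<Sum>i\<le>3. int (m choose i) * (-1) ^ i)"
    by (rule sum.mono_neutral_cong_right) (use assms in \<open>auto simp: m_def\<close>)
  also have "\<dots> = - int (m - 1 choose 3)"
  proof -
    obtain k where k: "m = Suc k" using assms unfolding m_def by (metis Suc_pred less_le_trans zero_less_numeral)
    show ?thesis unfolding k
      by (simp add: eval_nat_numeral)
  qed
  finally show ?thesis by (simp add: m_def)
qed

lemma neg1sq: "(-1::int) ^ c * ((-1) ^ c * x) = x"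
  by (simp add: mult.assoc[symmetric] power_mult_distrib[symmetric])

lemma d_formula:
  fixes a :: "'a::{field,finite}" and j0 :: "'a option"
  assumes a: "a \<noteq> 0" and w: "card S = w" "w \<ge> 4"
  defines "e \<equiv> (\<lambda>j. if j = j0 then a else 0)"
  shows "int (card (exs (syn e) S)) - int (card (exs (\<lambda>_. 0) S))
         = (-1) ^ w * (if j0 \<in> S then int (w - 2 choose 3) else int (w - 1 choose 3))"
proof -
  define f where "f T = (-1::int) ^ card T * (int (card (exs (syn e) T)) - int (card (exs (\<lambda>_. 0) T)))" for T
  define E where "E T = int (card (sol (syn e) T)) - int (card (sol (\<lambda>_. 0) T))" for T
  have E_eq: "E T = (\<Sum>U\<in>Pow T. (-1) ^ card U * f U)" for T
  proof -
    have "E T = (\<Sum>U\<in>Pow T. int (card (exs (syn e) U)) - int (card (exs (\<lambda>_. 0) U)))"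
      unfolding E_def sol_sum by (simp add: sum_subtractf)
    also have "\<dots> = (\<Sum>U\<in>Pow T. (-1) ^ card U * f U)"
      by (rule sum.cong) (auto simp: f_def neg1sq)
    finally show ?thesis .
  qed
  have fS: "f S = (\<Sum>T\<in>Pow S. (-1) ^ card T * E T)"
    by (rule inclusion_exclusion_symmetric) (use E_eq in auto)
  have E_val: "E T = (if card T \<le> 3 \<and> j0 \<notin> T then -1 else 0)" for T
  proof (cases "card T \<le> 3")
    case True
    then show ?thesis unfolding E_def e_def using sol_small_s[OF True a, of j0] sol_small_z[OF True]
      by simp
  next
    case False
    then show ?thesis unfolding E_def using sol_big[of T] by simp
  qed
  have "f S = - (\<Sum>T\<in>Pow S. if j0 \<notin> T then (if card T \<le> 3 then (-1) ^ card T else 0) else 0)"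
    unfolding fS E_val by (auto simp: sum_negf[symmetric] intro!: sum.cong)
  also have "(\<Sum>T\<in>Pow S. if j0 \<notin> T then (if card T \<le> 3 then (-1::int) ^ card T else 0) else 0)
     = (\<Sum>T\<in>{T\<in>Pow S. j0 \<notin> T}. (if card T \<le> 3 then (-1) ^ card T else 0))"
    by (rule sum.inter_filter[symmetric]) simp
  also have "{T\<in>Pow S. j0 \<notin> T} = Pow (S - {j0})" by auto
  also have "(\<Sum>T\<in>Pow (S - {j0}). (if card T \<le> 3 then (-1::int) ^ card T else 0))
       = - int (card (S - {j0}) - 1 choose 3)"
    by (rule alt3) (use w in \<open>auto simp: card_Diff_singleton_if\<close>)
  finally have "f S = int (card (S - {j0}) - 1 choose 3)" by simp
  also have "\<dots> = (if j0 \<in> S then int (w - 2 choose 3) else int (w - 1 choose 3))"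
    using w by (auto simp: card_Diff_singleton_if numeral_2_eq_2)
  finally have fS2: "f S = \<dots>" .
  have "int (card (exs (syn e) S)) - int (card (exs (\<lambda>_. 0) S)) = (-1) ^ card S * f S"
    unfolding f_def by (simp only: neg1sq)
  then show ?thesis using fS2 w(1) by simp
qed

theorem theorem4p2:
  fixes v :: "'a::{field,finite} option \<Rightarrow> 'a"
  assumes q5: "card (UNIV :: 'a set) \<ge> 5"
    and w1: "coset_weight (coset v (code_C :: ('a option \<Rightarrow> 'a) set)) = 1"
  shows "Bw 0 (coset v code_C) = 0 \<and> Bw 2 (coset v code_C) = 0 \<and> Bw 3 (coset v code_C) = 0
    \<and> Bw 1 (coset v code_C) = 1
    \<and> Bw 4 (coset v code_C) = card (UNIV :: 'a set) choose 4
    \<and> (\<forall>w\<ge>5. int (Bw w (coset v code_C)) =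
          int (Aw w (code_C :: ('a option \<Rightarrow> 'a) set))
          + (-1) ^ w * (int ((card (UNIV :: 'a set) + 1) choose w) * int ((w - 1) choose 3)
                        - int (card (UNIV :: 'a set) choose (w - 1)) * int ((w - 2) choose 2)))"
proof -
  define q where "q = card (UNIV :: 'a set)"
  define V where "V = coset v (code_C :: ('a option \<Rightarrow> 'a) set)"
  have codeC: "code_C = {c :: 'a option \<Rightarrow> 'a. \<forall>i<4. syn c i = 0}"
    by (simp add: code_C_def syn_def)
  have hw: "hweight u = card (supp u)" for u :: "'a option \<Rightarrow> 'a"
    by (simp add: hweight_def supp_def)
  have V1: "V = {u. \<forall>i<4. syn u i = syn v i}"
  proof (rule set_eqI, rule iffI)
    fix u assume "u \<in> V"
    then obtain c where "c \<in> code_C" "u = (\<lambda>j. v j + c j)" by (auto simp: V_def coset_def)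
    then show "u \<in> {u. \<forall>i<4. syn u i = syn v i}" by (simp add: codeC syn_add)
  next
    fix u assume u: "u \<in> {u. \<forall>i<4. syn u i = syn v i}"
    have "(\<lambda>j. u j - v j) \<in> code_C" using u by (simp add: codeC syn_diff)
    then show "u \<in> V" unfolding V_def coset_def
      using image_eqI[of u "\<lambda>c j. v j + c j" "\<lambda>j. u j - v j"] by simp
  qed
  have "v \<in> V" using V1 by simp
  then have "Min (hweight ` V) \<in> hweight ` V" by (intro Min_in) auto
  then obtain u0 where u0V: "u0 \<in> V" and hu0: "card (supp u0) = 1"
    using w1 unfolding V_def[symmetric] coset_weight_def hw by auto
  then obtain j0 where j0: "supp u0 = {j0}" by (metis card_1_singletonE)
  define a where "a = u0 j0"
  have a: "a \<noteq> 0" using j0 by (auto simp: supp_def a_def)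
  define e where "e = (\<lambda>j. if j = j0 then a else 0)"
  have u0e: "u0 = e" using j0 by (auto simp: e_def a_def supp_def fun_eq_iff)
  have V2: "V = {u. \<forall>i<4. syn u i = syn e i}" using V1 u0V u0e by auto
  have BwV: "Bw w V = (\<Sum>S\<in>{S. card S = w}. card (exs (syn e) S))" for w
  proof -
    have "{u \<in> V. hweight u = w} = {u. (\<forall>i<4. syn u i = syn e i) \<and> card (supp u) = w}"
      by (auto simp: V2 hw)
    then show ?thesis unfolding Bw_def using count_supp[of "syn e" w] by simp
  qed
  have AwC: "Aw w (code_C :: ('a option \<Rightarrow> 'a) set) = (\<Sum>S\<in>{S. card S = w}. card (exs (\<lambda>_. 0 :: 'a) S))" for w
  proof -
    have "{u \<in> code_C. hweight u = w} = {u :: 'a option \<Rightarrow> 'a. (\<forall>i<4. syn u i = 0) \<and> card (supp u) = w}"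
      by (auto simp: codeC hw)
    then show ?thesis unfolding Aw_def using count_supp[of "\<lambda>_. 0 :: 'a" w] by simp
  qed
  have small: "{u \<in> V. hweight u = w} = (if w = 1 then {e} else {})" if "w \<le> 3" for w
  proof -
    have "u = e" if "u \<in> V" "card (supp u) \<le> 3" for u
    proof -
      have "u \<in> sol (syn e) (supp u)" using that V2 by (auto simp: sol_def)
      then show ?thesis using sol_small_s[OF that(2) a, of j0] unfolding e_def
        by (auto split: if_splits)
    qed
    note H = this
    have ce: "card (supp e) = 1" using a by (auto simp: supp_def e_def)
    have eV: "e \<in> V" using V2 by simp
    have iff: "u \<in> {u \<in> V. hweight u = w} \<longleftrightarrow> u = e \<and> w = 1" for u
    proof
      assume "u \<in> {u \<in> V. hweight u = w}"
      then have uV: "u \<in> V" and cu: "card (supp u) = w" by (auto simp: hw)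
      then have "u = e" using H[OF uV] that by simp
      then show "u = e \<and> w = 1" using cu ce by simp
    next
      assume "u = e \<and> w = 1"
      then show "u \<in> {u \<in> V. hweight u = w}" using eV ce by (simp add: hw)
    qed
    show ?thesis
    proof (rule set_eqI)
      fix u
      show "u \<in> {u \<in> V. hweight u = w} \<longleftrightarrow> u \<in> (if w = 1 then {e} else {})"
        unfolding iff by simp
    qed
  qed
  have Aw4: "Aw 4 (code_C :: ('a option \<Rightarrow> 'a) set) = 0"
  proof -
    have "{u \<in> (code_C :: ('a option \<Rightarrow> 'a) set). hweight u = 4} = {}"
    proof (rule ccontr)
      assume "{u \<in> (code_C :: ('a option \<Rightarrow> 'a) set). hweight u = 4} \<noteq> {}"
      then obtain u :: "'a option \<Rightarrow> 'a" where "\<forall>i<4. syn u i = 0" "card (supp u) = 4"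
        by (auto simp: codeC hw)
      then have "u = (\<lambda>_. 0)" by (intro indep) simp_all
      with \<open>card (supp u) = 4\<close> show False by (simp add: supp_def)
    qed
    then show ?thesis by (simp add: Aw_def)
  qed
  have cardopt: "card (UNIV :: 'a option set) = Suc q" by (simp add: q_def)
  have big: "int (Bw w V) = int (Aw w (code_C :: ('a option \<Rightarrow> 'a) set))
      + (-1) ^ w * (int ((q + 1) choose w) * int ((w - 1) choose 3)
                    - int (q choose (w - 1)) * int ((w - 2) choose 2))" if w4: "w \<ge> 4" for w
  proof -
    define N0 where "N0 = card ({S :: 'a option set. card S = w} \<inter> - {S. j0 \<in> S})"
    define N1 where "N1 = card ({S :: 'a option set. card S = w} \<inter> {S. j0 \<in> S})"
    have "int (Bw w V) - int (Aw w (code_C :: ('a option \<Rightarrow> 'a) set))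
        = (\<Sum>S\<in>{S :: 'a option set. card S = w}. int (card (exs (syn e) S)) - int (card (exs (\<lambda>_. 0 :: 'a) S)))"
      unfolding BwV AwC by (simp add: sum_subtractf)
    also have "\<dots> = (\<Sum>S\<in>{S :: 'a option set. card S = w}. (-1) ^ w * (if j0 \<in> S then int (w - 2 choose 3) else int (w - 1 choose 3)))"
    proof (rule sum.cong[OF refl])
      fix S :: "'a option set" assume "S \<in> {S. card S = w}"
      then show "int (card (exs (syn e) S)) - int (card (exs (\<lambda>_. 0 :: 'a) S))
          = (-1) ^ w * (if j0 \<in> S then int (w - 2 choose 3) else int (w - 1 choose 3))"
        using d_formula[OF a, of S w j0] w4 unfolding e_def by simp
    qed
    also have "\<dots> = (-1) ^ w * (int N1 * int (w - 2 choose 3) + int N0 * int (w - 1 choose 3))"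
    proof -
      have "(\<Sum>S\<in>{S :: 'a option set. card S = w}. (if j0 \<in> S then int (w - 2 choose 3) else int (w - 1 choose 3)))
          = int N1 * int (w - 2 choose 3) + int N0 * int (w - 1 choose 3)"
        unfolding sum.If_cases[OF finite] N0_def N1_def by simp
      then show ?thesis by (simp add: sum_distrib_left[symmetric])
    qed
    finally have eq1: "int (Bw w V) - int (Aw w (code_C :: ('a option \<Rightarrow> 'a) set)) = \<dots>" .
    have N0: "N0 = q choose w"
    proof -
      have "{S :: 'a option set. card S = w} \<inter> - {S. j0 \<in> S} = {S. S \<subseteq> UNIV - {j0} \<and> card S = w}"
        by auto
      then show ?thesis unfolding N0_def using n_subsets[of "UNIV - {j0}" w] cardopt by simp
    qed
    have "N0 + N1 = card {S :: 'a option set. card S = w}"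
    proof -
      have "{S :: 'a option set. card S = w} = ({S :: 'a option set. card S = w} \<inter> - {S. j0 \<in> S}) \<union> ({S :: 'a option set. card S = w} \<inter> {S. j0 \<in> S})"
        by blast
      then have "card {S :: 'a option set. card S = w} = card (({S :: 'a option set. card S = w} \<inter> - {S. j0 \<in> S}) \<union> ({S :: 'a option set. card S = w} \<inter> {S. j0 \<in> S}))"
        by simp
      also have "\<dots> = N0 + N1" unfolding N0_def N1_def
        by (rule card_Un_disjoint) auto
      finally show ?thesis by simp
    qed
    also have "\<dots> = Suc q choose w" using n_subsets[of "UNIV :: 'a option set" w] cardopt by simp
    finally have N01: "N0 + N1 = Suc q choose w" .
    define l where "l = w - 2"
    have l: "w = Suc (Suc l)" using w4 unfolding l_def by arith
    have i1: "Suc q choose w = (q choose Suc l) + (q choose w)" unfolding l by simp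
    have N1: "N1 = q choose Suc l" using N01 i1 N0 by simp
    have i2: "Suc l choose 3 = (l choose 2) + (l choose 3)"
      using binomial_Suc_Suc[of l 2] by (simp add: numeral_3_eq_3 numeral_2_eq_2)
    have w1': "w - 1 = Suc l" "w - 2 = l" using l by auto
    have eq2: "int (Bw w V) - int (Aw w (code_C :: ('a option \<Rightarrow> 'a) set))
        = (-1) ^ w * (int (q choose Suc l) * int (l choose 3) + int (q choose w) * int ((l choose 2) + (l choose 3)))"
      using eq1 unfolding N0 N1 w1' i2 .
    have "int ((q + 1) choose w) * int ((w - 1) choose 3) - int (q choose (w - 1)) * int ((w - 2) choose 2)
        = int (q choose Suc l) * int (l choose 3) + int (q choose w) * int ((l choose 2) + (l choose 3))"
      unfolding w1' Suc_eq_plus1[symmetric] i1 i2 of_nat_add by (simp only: algebra_simps)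
    then show ?thesis using eq2 by simp
  qed
  have B4: "Bw 4 V = q choose 4"
  proof -
    have c33: "(4::nat) - 1 = 3" "(4::nat) - 2 = 2" by simp_all
    have "int (Bw 4 V) = int ((q + 1) choose 4) - int (q choose 3)"
      using big[of 4] Aw4 unfolding c33 by simp
    also have "(q + 1) choose 4 = (q choose 3) + (q choose 4)"
      using binomial_Suc_Suc[of q 3] by (simp add: numeral_eq_Suc)
    finally show ?thesis by simp
  qed
  have B0: "Bw 0 V = 0" using small[of 0] by (simp add: Bw_def)
  have B1: "Bw 1 V = 1" using small[of 1] by (simp add: Bw_def)
  have B2: "Bw 2 V = 0" using small[of 2] by (simp add: Bw_def)
  have B3: "Bw 3 V = 0" using small[of 3] by (simp add: Bw_def)
  show ?thesis
    unfolding V_def[symmetric] q_def[symmetric]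
    using B0 B1 B2 B3 B4 big by simp
qed

end
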